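(* Let $(\mathcal G,p)$ be a CPS on the finite set $\Omega$ with $\mathcal G$ closed under unions and nonempty intersections and covering $\Omega$. Let $G\in\mathcal G$, let $\mu_1,\dots,\mu_K$ be the distinct $\mathcal G$-atoms contained in $G$, let $E$ be an event and $q\in[0,1]$. If $p_{\mu_j}(E)=q$ for all $j=1,\dots,K$, then $p_G(E)=q$.
   Context: A CPS is a pair $(\mathcal G,p)$ where $\mathcal G$ is a family of nonempty subsets of $\Omega$ and $p$ assigns to each $G\in\mathcal G$ a probability measure $p_G$ on $\Omega$ with $p_G(G)=1$ and $p_G(E)=p_G(F)p_F(E)$ whenever $E\subseteq F\subseteq G$, $F,G\in\mathcal G$. The $\mathcal G$-atoms are the sets $m(\omega)=\bigcap\{H\in\mathcal G:\omega\in H\}$ for $\omega\in\Omega$; each belongs to $\mathcal G$. *)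

theory Defs
  imports "HOL-Probability.Probability"
begin

definition CPS :: "'a set \<Rightarrow> 'a set set \<Rightarrow> ('a set \<Rightarrow> 'a measure) \<Rightarrow> bool" where
  "CPS Omega Gs p \<longleftrightarrow>
     (\<forall>G\<in>Gs. G \<noteq> {} \<and> G \<subseteq> Omega) \<and>
     (\<forall>G\<in>Gs. prob_space (p G) \<and> space (p G) = Omega \<and> sets (p G) = Pow Omega
              \<and> measure (p G) G = 1) \<and>
     (\<forall>E F G. F \<in> Gs \<longrightarrow> G \<in> Gs \<longrightarrow> E \<subseteq> F \<longrightarrow> F \<subseteq> G \<longrightarrow>
              measure (p G) E = measure (p G) F * measure (p F) E)"

definition atom :: "'a set set \<Rightarrow> 'a \<Rightarrow> 'a set" where
  "atom Gs \<omega> = \<Inter>{H \<in> Gs. \<omega> \<in> H}"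

end

theory Submission
  imports Defs
begin

lemma cps_fm:
  assumes "CPS Omega Gs p" "H \<in> Gs" "finite Omega"
  shows "prob_space (p H)" "sets (p H) = Pow Omega" "space (p H) = Omega"
    "measure (p H) H = 1" "H \<subseteq> Omega" "H \<noteq> {}"
proof -
  have a: "\<forall>G\<in>Gs. G \<noteq> {} \<and> G \<subseteq> Omega" and
    b: "\<forall>G\<in>Gs. prob_space (p G) \<and> space (p G) = Omega \<and> sets (p G) = Pow Omega
              \<and> measure (p G) G = 1"
    using CPS_def[THEN iffD1, OF assms(1)] by (rule conjunct1, rule conjunct2[THEN conjunct1])
  show "prob_space (p H)" "sets (p H) = Pow Omega" "space (p H) = Omega"
    "measure (p H) H = 1" "H \<subseteq> Omega" "H \<noteq> {}"
    using a b assms(2) by blast+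
qed

lemma cps_restrict:
  assumes "CPS Omega Gs p" "F \<in> Gs" "finite Omega" "E \<subseteq> Omega"
  shows "measure (p F) E = measure (p F) (E \<inter> F)"
proof -
  note f = cps_fm[OF assms(1,2,3)]
  interpret prob_space "p F" by fact
  have s1: "E \<inter> F \<in> sets (p F)" "E - F \<in> sets (p F)" using f assms by auto
  have d: "(E \<inter> F) \<inter> (E - F) = {}" by blast
  have u: "(E \<inter> F) \<union> (E - F) = E" by blast
  have "measure (p F) E = measure (p F) (E \<inter> F) + measure (p F) (E - F)"
    using finite_measure_Union[OF s1 d] unfolding u .
  moreover have "measure (p F) (E - F) \<le> measure (p F) (Omega - F)"
    using f(2) assms(4) by (intro finite_measure_mono) auto
  moreover have "measure (p F) (Omega - F) = 0"
  proof -
    have "F \<in> events" using f by auto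
    then have "prob (space (p F) - F) = 1 - prob F" by (rule prob_compl)
    then show ?thesis using f by simp
  qed
  ultimately show ?thesis using measure_nonneg[of "p F" "E - F"] by linarith
qed

lemma cps_chain:
  assumes "CPS Omega Gs p" "H \<in> Gs" "F \<in> Gs" "F \<subseteq> H" "finite Omega" "E \<subseteq> Omega"
  shows "measure (p H) (E \<inter> F) = measure (p H) F * measure (p F) E"
proof -
  have "\<forall>E F G. F \<in> Gs \<longrightarrow> G \<in> Gs \<longrightarrow> E \<subseteq> F \<longrightarrow> F \<subseteq> G \<longrightarrow>
              measure (p G) E = measure (p G) F * measure (p F) E"
    using CPS_def[THEN iffD1, OF assms(1)] by (rule conjunct2[THEN conjunct2])
  then have "F \<in> Gs \<longrightarrow> H \<in> Gs \<longrightarrow> E \<inter> F \<subseteq> F \<longrightarrow> F \<subseteq> H \<longrightarrow>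
              measure (p H) (E \<inter> F) = measure (p H) F * measure (p F) (E \<inter> F)"
    by (elim allE)
  then have "measure (p H) (E \<inter> F) = measure (p H) F * measure (p F) (E \<inter> F)"
    using assms(2,3,4) Int_lower2 by (elim impE) (assumption | rule Int_lower2)+
  then show ?thesis using cps_restrict[OF assms(1,3,5,6)] by simp
qed

lemma cps_union:
  assumes "CPS Omega Gs p" "finite Omega" "E \<subseteq> Omega"
    and "A \<in> Gs" "B \<in> Gs" "A \<union> B \<in> Gs"
    and "measure (p A) E = q" "measure (p B) E = q"
    and "A \<inter> B \<noteq> {} \<Longrightarrow> A \<inter> B \<in> Gs \<and> measure (p (A \<inter> B)) E = q"
  shows "measure (p (A \<union> B)) E = q"
proof -
  let ?H = "A \<union> B"
  note f = cps_fm[OF assms(1,6,2)]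
  note fA = cps_fm[OF assms(1,4,2)]
  note fB = cps_fm[OF assms(1,5,2)]
  interpret prob_space "p ?H" by fact
  have fm: "X \<subseteq> Omega \<Longrightarrow> X \<in> fmeasurable (p ?H)" for X
    using f fmeasurable_eq_sets by auto
  have "measure (p ?H) E = measure (p ?H) (E \<inter> A \<union> E \<inter> B)"
    using cps_restrict[OF assms(1,6,2,3)] by (simp add: Int_Un_distrib)
  also have "\<dots> = measure (p ?H) (E \<inter> A) + measure (p ?H) (E \<inter> B) - measure (p ?H) (E \<inter> (A \<inter> B))"
  proof -
    have s: "E \<inter> A \<subseteq> Omega" "E \<inter> B \<subseteq> Omega" using assms(3) by auto
    have e: "E \<inter> A \<inter> (E \<inter> B) = E \<inter> (A \<inter> B)" by auto
    show ?thesis using measure_Un3[OF fm[OF s(1)] fm[OF s(2)]] unfolding e .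
  qed
  also have "measure (p ?H) (E \<inter> A) = measure (p ?H) A * q"
    using cps_chain[OF assms(1,6,4) _ assms(2,3)] assms(7) by simp
  also have "measure (p ?H) (E \<inter> B) = measure (p ?H) B * q"
    using cps_chain[OF assms(1,6,5) _ assms(2,3)] assms(8) by simp
  also have "measure (p ?H) (E \<inter> (A \<inter> B)) = measure (p ?H) (A \<inter> B) * q"
  proof (cases "A \<inter> B = {}")
    case True then show ?thesis by simp
  next
    case False
    with assms(9) have "A \<inter> B \<in> Gs" "measure (p (A \<inter> B)) E = q" by auto
    then show ?thesis using cps_chain[OF assms(1,6) _ _ assms(2,3), of "A \<inter> B"] by auto
  qed
  finally have eq: "measure (p ?H) E = measure (p ?H) A * q + measure (p ?H) B * q - measure (p ?H) (A \<inter> B) * q" .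
  have one: "measure (p ?H) A + measure (p ?H) B - measure (p ?H) (A \<inter> B) = 1"
    using measure_Un3[OF fm fm, of A B] fA fB f by simp
  have "measure (p ?H) E = q * (measure (p ?H) A + measure (p ?H) B - measure (p ?H) (A \<inter> B))"
    using eq by (simp add: algebra_simps)
  then show ?thesis using one by simp
qed

theorem lemma6:
  fixes Omega :: "'a set" and Gs :: "'a set set" and p :: "'a set \<Rightarrow> 'a measure"
    and G E :: "'a set" and q :: real
  assumes "finite Omega"
    and "CPS Omega Gs p"
    and "\<And>A B. A \<in> Gs \<Longrightarrow> B \<in> Gs \<Longrightarrow> A \<union> B \<in> Gs"
    and "\<And>A B. A \<in> Gs \<Longrightarrow> B \<in> Gs \<Longrightarrow> A \<inter> B \<noteq> {} \<Longrightarrow> A \<inter> B \<in> Gs"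
    and "\<Union>Gs = Omega"
    and "G \<in> Gs"
    and "E \<subseteq> Omega"
    and "0 \<le> q" "q \<le> 1"
    and "\<And>\<mu>. \<mu> \<in> {atom Gs \<omega> | \<omega>. \<omega> \<in> Omega \<and> atom Gs \<omega> \<subseteq> G} \<Longrightarrow>
               measure (p \<mu>) E = q"
  shows "measure (p G) E = q"
proof -
  note C = assms(2)
  have Gsub: "H \<subseteq> Omega" if "H \<in> Gs" for H using C that unfolding CPS_def by auto
  have finGs: "finite Gs" using Gsub assms(1) by (meson PowI finite_Pow_iff finite_subset subsetI)
  have unionG: "F \<noteq> {} \<Longrightarrow> F \<subseteq> Gs \<Longrightarrow> \<Union>F \<in> Gs" if "finite F" for F
    using that
  proof (induction F rule: finite_induct)
    case empty then show ?case by simp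
  next
    case (insert x F)
    then show ?case using assms(3) by (cases "F = {}") auto
  qed
  have interG: "F \<noteq> {} \<Longrightarrow> F \<subseteq> Gs \<Longrightarrow> w \<in> \<Inter>F \<Longrightarrow> \<Inter>F \<in> Gs" if "finite F" for F w
    using that
  proof (induction F rule: finite_induct)
    case empty then show ?case by simp
  next
    case (insert x F)
    then show ?case using assms(4)[of x "\<Inter>F"] by (cases "F = {}") auto
  qed
  have atomG: "atom Gs w \<in> Gs" if "w \<in> Omega" for w
  proof -
    have "{H \<in> Gs. w \<in> H} \<noteq> {}" using assms(5) that by auto
    then show ?thesis unfolding atom_def using interG[of "{H \<in> Gs. w \<in> H}" w] finGs by auto
  qed
  have atom_in: "w \<in> atom Gs w" for w unfolding atom_def by auto
  have atom_sub: "atom Gs w \<subseteq> H" if "H \<in> Gs" "w \<in> H" for w H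
    using that unfolding atom_def by auto
  have main: "\<forall>H. H \<in> Gs \<longrightarrow> H \<subseteq> G \<longrightarrow> card H = n \<longrightarrow> measure (p H) E = q" for n
  proof (induction n rule: less_induct)
    case (less n)
    show ?case
    proof (intro allI impI)
      fix H assume H: "H \<in> Gs" "H \<subseteq> G" "card H = n"
      have HO: "H \<subseteq> Omega" using Gsub H by auto
      have finH: "finite H" using HO assms(1) finite_subset by auto
      have Hne: "H \<noteq> {}" using C H unfolding CPS_def by auto
      define At where "At = atom Gs ` H"
      have AtG: "X \<in> Gs" "X \<subseteq> H" if "X \<in> At" for X
        using that atomG atom_sub H HO unfolding At_def by auto
      have Atq: "measure (p X) E = q" if XA: "X \<in> At" for X
      proof -
        obtain w where "w \<in> H" "X = atom Gs w" using XA unfolding At_def by auto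
        then have "X \<in> {atom Gs \<omega> | \<omega>. \<omega> \<in> Omega \<and> atom Gs \<omega> \<subseteq> G}"
          using HO atom_sub[OF H(1)] H(2) by blast
        then show ?thesis by (rule assms(10))
      qed
      show "measure (p H) E = q"
      proof (cases "H \<in> At")
        case True then show ?thesis using Atq by auto
      next
        case False
        have "finite At" "At \<noteq> {}" using finH Hne unfolding At_def by auto
        then obtain A where A: "A \<in> At" and Amax: "\<forall>b\<in>At. A \<le> b \<longrightarrow> A = b"
          using finite_has_maximal by blast
        obtain w0 where w0: "w0 \<in> H" "A = atom Gs w0" using A unfolding At_def by auto
        have AH: "A \<subseteq> H" "A \<noteq> H" using AtG[OF A] False A by auto
        define B where "B = \<Union>(atom Gs ` (H - A))"
        have HA: "H - A \<noteq> {}" using AH by auto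
        have BG: "B \<in> Gs" unfolding B_def
          using unionG[of "atom Gs ` (H - A)"] HA finH atomG HO by auto
        have BH: "B \<subseteq> H" unfolding B_def using atom_sub[OF H(1)] by auto
        have AB: "A \<union> B = H"
        proof
          show "A \<union> B \<subseteq> H" using AH BH by auto
          show "H \<subseteq> A \<union> B" unfolding B_def using atom_in by blast
        qed
        have w0B: "w0 \<notin> B"
        proof
          assume "w0 \<in> B"
          then obtain x where x: "x \<in> H - A" "w0 \<in> atom Gs x" unfolding B_def by auto
          have xO: "x \<in> Omega" using x HO by auto
          have "A \<subseteq> atom Gs x" using w0 atom_sub[OF atomG[OF xO] x(2)] by simp
          moreover have "atom Gs x \<in> At" using x unfolding At_def by auto
          ultimately have "A = atom Gs x" using Amax by auto
          then show False using x atom_in by auto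
        qed
        have AG: "A \<in> Gs" using AtG(1)[OF A] .
        have cardlt: "card X < n" if "X \<subseteq> H" "X \<noteq> H" for X
          using H(3) finH that psubset_card_mono[of H X] by blast
        have qA: "measure (p A) E = q"
          using less.IH[OF cardlt[OF AH]] AG AH H by auto
        have BneH: "B \<noteq> H" using w0B w0 by auto
        have qB: "measure (p B) E = q"
          using less.IH[OF cardlt[OF BH BneH]] BG BH H by auto
        have qAB: "A \<inter> B \<in> Gs \<and> measure (p (A \<inter> B)) E = q" if ne: "A \<inter> B \<noteq> {}"
        proof -
          have g: "A \<inter> B \<in> Gs" using assms(4)[OF AG BG ne] .
          have s: "A \<inter> B \<subseteq> H" "A \<inter> B \<noteq> H" using AH by auto
          have "A \<inter> B \<subseteq> G" using s H by auto
          then show ?thesis using g less.IH[OF cardlt[OF s]] by blast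
        qed
        have "measure (p (A \<union> B)) E = q"
          using cps_union[OF C assms(1,7) AG BG _ qA qB qAB] AB H(1) by auto
        then show ?thesis using AB by simp
      qed
    qed
  qed
  show ?thesis using main assms(6) by blast
qed

end
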